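(* Let $\pi_1,\dots,\pi_n,\pi_{n+1}\ge 0$ with $\pi_i>0$ for some $i\le n$, and let $\boldsymbol P\in\mathcal R_{n+1}$ with $0<\Pr[P_{n+1}=0]<1$. Define the active-administrator compensations $W_i^{\mathrm{active}}=\big(\sum_{j=1}^{n+1}\pi_j\big)P_i$ for $i=1,\dots,n+1$, and the passive-administrator compensations (for the investment vector $(\pi_1,\dots,\pi_n,0)$) $W_i^{\mathrm{passive}}=\big(\sum_{j=1}^{n}\pi_j\big)P_i+\pi_iP_{n+1}$ for $i=1,\dots,n$. Then the following are equivalent: (a) $\pi_i=E[W_i^{\mathrm{active}}]$ for $i=1,\dots,n$; (b) $\pi_i=E[W_i^{\mathrm{passive}}]$ for $i=1,\dots,n$, and $\pi_{n+1}=E[W_{n+1}^{\mathrm{active}}]$.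
   Context: All random variables live on a probability space $(\Omega,\mathcal F,\Pr)$; $L^0_+$ denotes the non-negative random variables. The set of relative compensation vectors is $$\mathcal R_{n+1}=\Big\{(P_1,\dots,P_{n+1})\in (L^0_+)^{n+1}:\ \sum_{j=1}^{n+1}P_j=1,\ P_{n+1}=\mathbf 1\Big(\sum_{j=1}^nP_j=0\Big)\Big\},$$ where $\mathbf 1(A)$ denotes the indicator of the event $A$. *)

theory Defs
  imports "HOL-Probability.Probability"
begin

text \<open>Components are indexed 1..n+1; elements of L^0 are identified up to
  almost-sure equality, so the defining equalities hold almost surely.\<close>
definition rel_comp :: "'a measure \<Rightarrow> nat \<Rightarrow> (nat \<Rightarrow> 'a \<Rightarrow> real) \<Rightarrow> bool" where
  "rel_comp M n P \<longleftrightarrow>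
     (\<forall>j\<in>{1..n+1}. P j \<in> borel_measurable M \<and> (AE x in M. 0 \<le> P j x)) \<and>
     (AE x in M. (\<Sum>j=1..n+1. P j x) = 1) \<and>
     (AE x in M. P (n+1) x = (if (\<Sum>j=1..n. P j x) = 0 then 1 else 0))"

end

theory Submission
  imports Defs
begin

theorem corollary1:
  fixes M :: "'a measure" and n :: nat and \<pi> :: "nat \<Rightarrow> real"
    and P :: "nat \<Rightarrow> 'a \<Rightarrow> real"
  assumes "prob_space M"
    and "\<forall>j\<in>{1..n+1}. 0 \<le> \<pi> j"
    and "\<exists>i\<in>{1..n}. 0 < \<pi> i"
    and "rel_comp M n P"
    and "0 < measure M {x\<in>space M. P (n+1) x = 0}"
    and "measure M {x\<in>space M. P (n+1) x = 0} < 1"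
  shows "(\<forall>i\<in>{1..n}. \<pi> i = prob_space.expectation M (\<lambda>x. (\<Sum>j=1..n+1. \<pi> j) * P i x))
     \<longleftrightarrow>
     ((\<forall>i\<in>{1..n}. \<pi> i = prob_space.expectation M
                           (\<lambda>x. (\<Sum>j=1..n. \<pi> j) * P i x + \<pi> i * P (n+1) x))
      \<and> \<pi> (n+1) = prob_space.expectation M (\<lambda>x. (\<Sum>j=1..n+1. \<pi> j) * P (n+1) x))"
proof -
  interpret prob_space M by fact
  have meas: "\<And>j. j \<in> {1..n+1} \<Longrightarrow> P j \<in> borel_measurable M"
    and nn: "\<And>j. j \<in> {1..n+1} \<Longrightarrow> AE x in M. 0 \<le> P j x"
    and s1: "AE x in M. (\<Sum>j=1..n+1. P j x) = 1"
    and ind: "AE x in M. P (n+1) x = (if (\<Sum>j=1..n. P j x) = 0 then 1 else 0)"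
    using assms(4) unfolding rel_comp_def by auto
  have allnn: "AE x in M. \<forall>j\<in>{1..n+1}. 0 \<le> P j x"
    by (rule AE_finite_allI) (auto intro: nn)
  have bnd: "AE x in M. \<forall>j\<in>{1..n+1}. 0 \<le> P j x \<and> P j x \<le> 1"
    using allnn s1
  proof eventually_elim
    case (elim x)
    show ?case
    proof (intro ballI conjI)
      fix j assume j: "j \<in> {1..n+1}"
      then show "0 \<le> P j x" using elim by auto
      have "P j x \<le> (\<Sum>k=1..n+1. P k x)"
        using j elim(1) by (intro member_le_sum) auto
      then show "P j x \<le> 1" using elim(2) by simp
    qed
  qed
  have int: "integrable M (P j)" if j: "j \<in> {1..n+1}" for j
  proof (rule integrable_const_bound[where B=1])
    show "AE x in M. norm (P j x) \<le> 1" using bnd by eventually_elim (use j in auto)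
    show "P j \<in> borel_measurable M" using meas j by auto
  qed
  define e where "e j = expectation (P j)" for j
  define q where "q = e (n+1)"
  have sumE: "(\<Sum>j=1..n+1. e j) = 1"
  proof -
    have "(\<Sum>j=1..n+1. e j) = expectation (\<lambda>x. \<Sum>j=1..n+1. P j x)"
      unfolding e_def by (rule Bochner_Integration.integral_sum[symmetric]) (use int in auto)
    also have "\<dots> = expectation (\<lambda>x. 1)"
      by (rule integral_cong_AE) (use s1 meas in auto)
    finally show ?thesis by (simp add: prob_space)
  qed
  have sumn: "(\<Sum>j=1..n. e j) = 1 - q"
    using sumE by (simp add: q_def)
  let ?A = "{x\<in>space M. P (n+1) x = 0}"
  have Asets: "?A \<in> sets M" using meas[of "n+1"] by measurable
  have qA: "1 - q = measure M ?A"
  proof -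
    have "1 - q = expectation (\<lambda>x. 1 - P (n+1) x)"
      unfolding q_def e_def using int[of "n+1"] by (simp add: prob_space)
    also have "\<dots> = expectation (indicator ?A)"
    proof (rule integral_cong_AE)
      show "(\<lambda>x. 1 - P (n + 1) x) \<in> borel_measurable M" using meas[of "n+1"] by auto
      show "(indicator ?A :: 'a \<Rightarrow> real) \<in> borel_measurable M" using Asets by auto
      show "AE x in M. 1 - P (n + 1) x = indicator ?A x"
        using ind AE_space by eventually_elim (auto simp: indicator_def)
    qed
    also have "\<dots> = measure M ?A" using Asets by simp
    finally show ?thesis .
  qed
  have q1: "1 - q > 0" using qA assms(5) by simp
  define S where "S = (\<Sum>j=1..n. \<pi> j)"
  have T: "(\<Sum>j=1..n+1. \<pi> j) = S + \<pi> (n+1)" by (simp add: S_def)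
  have E1: "expectation (\<lambda>x. (\<Sum>j=1..n+1. \<pi> j) * P i x) = (S + \<pi> (n+1)) * e i" for i
    unfolding T[symmetric] e_def by simp
  have E2: "expectation (\<lambda>x. (\<Sum>j=1..n. \<pi> j) * P i x + \<pi> i * P (n+1) x) = S * e i + \<pi> i * q"
    if "i \<in> {1..n}" for i
    unfolding S_def e_def q_def using int[of i] int[of "n+1"] that by simp
  have "(\<forall>i\<in>{1..n}. \<pi> i = (S + \<pi> (n+1)) * e i) \<longleftrightarrow>
        ((\<forall>i\<in>{1..n}. \<pi> i = S * e i + \<pi> i * q) \<and> \<pi> (n+1) = (S + \<pi> (n+1)) * q)"
  proof
    assume a: "\<forall>i\<in>{1..n}. \<pi> i = (S + \<pi> (n+1)) * e i"
    have "(\<Sum>i=1..n. \<pi> i) = (\<Sum>i=1..n. (S + \<pi> (n+1)) * e i)" using a by (intro sum.cong) auto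
    then have "S = (\<Sum>i=1..n. (S + \<pi> (n+1)) * e i)" by (simp only: S_def[symmetric])
    also have "\<dots> = (S + \<pi> (n+1)) * (1 - q)" by (simp only: sum_distrib_left[symmetric] sumn)
    finally have Sq: "S = (S + \<pi> (n+1)) * (1 - q)" .
    show "(\<forall>i\<in>{1..n}. \<pi> i = S * e i + \<pi> i * q) \<and> \<pi> (n+1) = (S + \<pi> (n+1)) * q"
    proof
      show "\<forall>i\<in>{1..n}. \<pi> i = S * e i + \<pi> i * q"
      proof
        fix i assume "i \<in> {1..n}"
        then have h: "\<pi> i = (S + \<pi> (n+1)) * e i" using a by auto
        show "\<pi> i = S * e i + \<pi> i * q" using h Sq by algebra
      qed
      show "\<pi> (n+1) = (S + \<pi> (n+1)) * q" using Sq by algebra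
    qed
  next
    assume b: "(\<forall>i\<in>{1..n}. \<pi> i = S * e i + \<pi> i * q) \<and> \<pi> (n+1) = (S + \<pi> (n+1)) * q"
    then have Sq: "S = (S + \<pi> (n+1)) * (1 - q)" by algebra
    show "\<forall>i\<in>{1..n}. \<pi> i = (S + \<pi> (n+1)) * e i"
    proof
      fix i assume "i \<in> {1..n}"
      then have h: "\<pi> i = S * e i + \<pi> i * q" using b by auto
      have "\<pi> i * (1 - q) = S * e i" using h by algebra
      also have "\<dots> = ((S + \<pi> (n+1)) * e i) * (1 - q)" using Sq by algebra
      finally show "\<pi> i = (S + \<pi> (n+1)) * e i" using q1 by simp
    qed
  qed
  then show ?thesis
    using E1 E2 by (simp add: q_def)
qed

end
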